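(* Let $f,g:(0,\infty)\to\mathbb{R}$ be convex functions with $f(1)=g(1)=0$. (i) If $f(0)=\infty$ and $\liminf_{t\to0}\frac{g(t)}{f(t)}=\beta_0$, then for every $\beta>\beta_0$, \[ \sup_{P,Q}\bigl(\beta\, D_f(P,Q)-D_g(P,Q)\bigr)=\infty, \] the supremum being over all pairs of probability distributions $P,Q$ (on a common space). (ii) If $f^{\ast}(0)=\infty$ and $\liminf_{t\to\infty}\frac{g(t)}{f(t)}=\beta_0$, then for every $\beta>\beta_0$, $\sup_{P,Q}\bigl(\beta\, D_f(P,Q)-D_g(P,Q)\bigr)=\infty$.
   Context: For a convex function $f:(0,\infty)\to\mathbb{R}$ with $f(1)=0$, set $f(0)=\lim_{t\to0}f(t)$, $f^{\ast}(t)=tf(t^{-1})$ and $f^{\ast}(0)=\lim_{t\to\infty}f(t)/t$ (values in $(-\infty,\infty]$). If $P,Q$ are probability measures absolutely continuous with respect to a measure $\mu$ with densities $p=dP/d\mu$, $q=dQ/d\mu$, the $f$-divergence is $D_f(P,Q)=\int_{\{q>0\}} f(p/q)\,dQ+f^{\ast}(0)\,P(q=0)$. *)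

theory Defs
  imports "HOL-Analysis.Analysis"
begin

definition fzero :: "(real \<Rightarrow> real) \<Rightarrow> ereal" where
  "fzero f = Lim (at_right 0) (\<lambda>t. ereal (f t))"

definition fstar0 :: "(real \<Rightarrow> real) \<Rightarrow> ereal" where
  "fstar0 f = Lim at_top (\<lambda>t. ereal (f t / t))"

definition fext :: "(real \<Rightarrow> real) \<Rightarrow> real \<Rightarrow> ereal" where
  "fext f t = (if t > 0 then ereal (f t) else fzero f)"

definition density_pair :: "'a measure \<Rightarrow> ('a \<Rightarrow> real) \<Rightarrow> ('a \<Rightarrow> real) \<Rightarrow> bool" where
  "density_pair \<mu> p q \<longleftrightarrow>
     p \<in> borel_measurable \<mu> \<and> q \<in> borel_measurable \<mu> \<and>
     (\<forall>x. 0 \<le> p x) \<and> (\<forall>x. 0 \<le> q x) \<and>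
     (\<integral>\<^sup>+x. ennreal (p x) \<partial>\<mu>) = 1 \<and> (\<integral>\<^sup>+x. ennreal (q x) \<partial>\<mu>) = 1"

text \<open>D_f(P,Q) = int_{q>0} f(p/q) dQ + f*(0) P(q=0), where dQ = q d mu, dP = p d mu.
  The integral of the extended-real integrand is positive part minus negative part
  (the negative part is always finite for convex f).\<close>
definition fdiv :: "(real \<Rightarrow> real) \<Rightarrow> 'a measure \<Rightarrow> ('a \<Rightarrow> real) \<Rightarrow> ('a \<Rightarrow> real) \<Rightarrow> ereal" where
  "fdiv f \<mu> p q =
     (let h = (\<lambda>x. if q x > 0 then ereal (q x) * fext f (p x / q x) else 0)
      in enn2ereal (\<integral>\<^sup>+x. e2ennreal (h x) \<partial>\<mu>) - enn2ereal (\<integral>\<^sup>+x. e2ennreal (- h x) \<partial>\<mu>))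
     + fstar0 f * enn2ereal (\<integral>\<^sup>+x. ennreal (p x) * indicator {x. q x = 0} x \<partial>\<mu>)"

text \<open>sup over pairs (P,Q) of beta D_f(P,Q) - D_g(P,Q) is infinite (pairs with D_g = oo,
  where the difference is undefined or -oo, are excluded).\<close>
definition gap_unbounded :: "real \<Rightarrow> (real \<Rightarrow> real) \<Rightarrow> (real \<Rightarrow> real) \<Rightarrow> bool" where
  "gap_unbounded \<beta> f g \<longleftrightarrow>
     (\<forall>M::real. \<exists>(\<mu>::nat measure) p q. density_pair \<mu> p q \<and> fdiv g \<mu> p q < \<infinity> \<and>
        ereal M < ereal \<beta> * fdiv f \<mu> p q - fdiv g \<mu> p q)"

end

theory Submission imports Defs begin

lemma fdiv_finite:
  fixes f :: "real \<Rightarrow> real" and A :: "'a set"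
  assumes A: "finite A" and q: "\<And>x. x \<in> A \<Longrightarrow> q x > 0" and p: "\<And>x. x \<in> A \<Longrightarrow> p x > 0"
  shows "fdiv f (count_space A) p q = ereal (\<Sum>x\<in>A. q x * f (p x / q x))"
proof -
  define v where "v x = q x * f (p x / q x)" for x
  have h: "(if q x > 0 then ereal (q x) * fext f (p x / q x) else 0) = ereal (v x)" if "x \<in> A" for x
    using q[OF that] p[OF that] by (simp add: fext_def v_def)
  have e: "(\<Sum>x\<in>A. ennreal (w x)) = ennreal (\<Sum>x\<in>A. max 0 (w x))" for w :: "'a \<Rightarrow> real"
  proof -
    have "(\<Sum>x\<in>A. ennreal (w x)) = (\<Sum>x\<in>A. ennreal (max 0 (w x)))"
      by (intro sum.cong) (auto simp: max_def ennreal_neg)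
    also have "\<dots> = ennreal (\<Sum>x\<in>A. max 0 (w x))" by (rule sum_ennreal) simp
    finally show ?thesis .
  qed
  have 1: "(\<integral>\<^sup>+x. e2ennreal (if q x > 0 then ereal (q x) * fext f (p x / q x) else 0) \<partial>count_space A)
     = ennreal (\<Sum>x\<in>A. max 0 (v x))"
    using A h by (simp add: nn_integral_count_space_finite e[symmetric] cong: sum.cong)
  have 2: "(\<integral>\<^sup>+x. e2ennreal (- (if q x > 0 then ereal (q x) * fext f (p x / q x) else 0)) \<partial>count_space A)
     = ennreal (\<Sum>x\<in>A. max 0 (- v x))"
    using A h by (simp add: nn_integral_count_space_finite e[symmetric] cong: sum.cong)
  have 3: "(\<integral>\<^sup>+x. ennreal (p x) * indicator {x. q x = 0} x \<partial>count_space A) = 0"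
    using A q by (auto simp: nn_integral_count_space_finite intro!: sum.neutral) (metis less_irrefl)
  have 4: "(\<Sum>x\<in>A. max 0 (v x)) - (\<Sum>x\<in>A. max 0 (- v x)) = (\<Sum>x\<in>A. v x)"
    by (simp add: sum_subtractf[symmetric]) (intro sum.cong; simp add: max_def)
  show ?thesis
    unfolding fdiv_def Let_def 1 2 3 using 4
    by (simp add: sum_nonneg v_def zero_ennreal.rep_eq)
qed

lemma lim0:
  fixes f :: "real \<Rightarrow> real"
  assumes cf: "convex_on {0<..} f" and f1: "f 1 = 0" and fz: "fzero f = \<infinity>"
  shows "((\<lambda>t. ereal (f t)) \<longlongrightarrow> \<infinity>) (at_right 0)"
proof -
  have mono: "f t / (1 - t) \<le> f s / (1 - s)" if "0 < s" "s < t" "t < 1" for s t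
  proof -
    have "(f s - f 1) / (s - 1) \<le> (f t - f 1) / (t - 1)"
      using convex_on_slope_le(2)[OF cf, of s 1 t] that by auto
    moreover have "(f x - f 1) / (x - 1) = - (f x / (1 - x))" for x
      using f1 by (metis diff_zero minus_diff_eq divide_minus_right)
    ultimately have "- (f s / (1 - s)) \<le> - (f t / (1 - t))" by simp
    then show ?thesis by simp
  qed
  define L where "L = (SUP t\<in>{0<..<1::real}. ereal (f t / (1 - t)))"
  have lim1: "((\<lambda>t. ereal (f t / (1 - t))) \<longlongrightarrow> L) (at_right 0)"
  proof (rule increasing_tendsto)
    show "\<forall>\<^sub>F t in at_right 0. ereal (f t / (1 - t)) \<le> L"
      unfolding eventually_at_right_field L_def
      by (intro exI[of _ 1]) (auto intro!: SUP_upper)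
    fix x assume "x < L"
    then obtain t0 where t0: "t0 \<in> {0<..<1}" "x < ereal (f t0 / (1 - t0))"
      unfolding L_def less_SUP_iff by blast
    show "\<forall>\<^sub>F t in at_right 0. x < ereal (f t / (1 - t))"
      unfolding eventually_at_right_field
    proof (intro exI[of _ t0] conjI allI impI)
      fix t :: real assume "0 < t" "t < t0"
      then have "f t0 / (1 - t0) \<le> f t / (1 - t)" using mono t0(1) by auto
      then show "x < ereal (f t / (1 - t))" using t0(2) by (meson ereal_less_eq(3) less_le_trans)
    qed (use t0 in auto)
  qed
  have lim2: "((\<lambda>t. ereal (1 - t)) \<longlongrightarrow> ereal 1) (at_right 0)"
    unfolding lim_ereal by (intro tendsto_eq_intros) auto
  have "((\<lambda>t. ereal (1 - t) * ereal (f t / (1 - t))) \<longlongrightarrow> ereal 1 * L) (at_right 0)"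
    by (rule tendsto_mult_ereal[OF lim2 lim1]) auto
  moreover have "\<forall>\<^sub>F t in at_right 0. ereal (1 - t) * ereal (f t / (1 - t)) = ereal (f t)"
      unfolding eventually_at_right_field by (intro exI[of _ 1]) auto
  ultimately have lim3: "((\<lambda>t. ereal (f t)) \<longlongrightarrow> L) (at_right 0)"
    using Lim_transform_eventually by fastforce
  then have "fzero f = L" unfolding fzero_def by (intro tendsto_Lim) auto
  with lim3 fz show ?thesis by simp
qed

lemma liminf_top:
  fixes f :: "real \<Rightarrow> real"
  assumes cf: "convex_on {0<..} f" and f1: "f 1 = 0" and fz: "fstar0 f = \<infinity>"
  shows "((\<lambda>t. ereal (f t / t)) \<longlongrightarrow> \<infinity>) at_top"
proof -
  have mono: "f s / (s - 1) \<le> f t / (t - 1)" if "1 < s" "s < t" for s t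
  proof -
    have "(f 1 - f s) / (1 - s) \<le> (f 1 - f t) / (1 - t)"
      using convex_on_slope_le(1)[OF cf, of 1 t s] that by auto
    moreover have "(f 1 - f x) / (1 - x) = f x / (x - 1)" for x
      using f1 by (metis diff_0 minus_diff_eq divide_minus_left divide_minus_right minus_minus)
    ultimately show ?thesis by simp
  qed
  define L where "L = (SUP t\<in>{(1::real)<..}. ereal (f t / (t - 1)))"
  have lim1: "((\<lambda>t. ereal (f t / (t - 1))) \<longlongrightarrow> L) at_top"
  proof (rule increasing_tendsto)
    show "\<forall>\<^sub>F t in at_top. ereal (f t / (t - 1)) \<le> L"
      unfolding eventually_at_top_linorder L_def
      by (intro exI[of _ 2]) (auto intro!: SUP_upper)
    fix x assume "x < L"
    then obtain t0 where t0: "t0 \<in> {1<..}" "x < ereal (f t0 / (t0 - 1))"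
      unfolding L_def less_SUP_iff by blast
    show "\<forall>\<^sub>F t in at_top. x < ereal (f t / (t - 1))"
      unfolding eventually_at_top_linorder
    proof (intro exI[of _ "t0 + 1"] allI impI)
      fix t :: real assume "t0 + 1 \<le> t"
      then have "f t0 / (t0 - 1) \<le> f t / (t - 1)" using mono t0(1) by auto
      then show "x < ereal (f t / (t - 1))" using t0(2) by (meson ereal_less_eq(3) less_le_trans)
    qed
  qed
  have lim2: "((\<lambda>t. ereal (1 - 1 / t)) \<longlongrightarrow> ereal 1) at_top"
  proof -
    have "((\<lambda>t::real. inverse t) \<longlongrightarrow> 0) at_top"
      by (rule tendsto_inverse_0_at_top[OF filterlim_ident])
    then have "((\<lambda>t::real. 1 - inverse t) \<longlongrightarrow> 1 - 0) at_top"
      by (intro tendsto_diff tendsto_const)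
    then show ?thesis unfolding lim_ereal by (simp add: inverse_eq_divide)
  qed
  have "((\<lambda>t. ereal (1 - 1 / t) * ereal (f t / (t - 1))) \<longlongrightarrow> ereal 1 * L) at_top"
    by (rule tendsto_mult_ereal[OF lim2 lim1]) auto
  moreover have "\<forall>\<^sub>F t in at_top. ereal (1 - 1 / t) * ereal (f t / (t - 1)) = ereal (f t / t)"
    unfolding eventually_at_top_linorder by (intro exI[of _ 2]) (auto simp: field_simps)
  ultimately have lim3: "((\<lambda>t. ereal (f t / t)) \<longlongrightarrow> L) at_top"
    using Lim_transform_eventually by fastforce
  then have "fstar0 f = L" unfolding fstar0_def by (intro tendsto_Lim) auto
  with lim3 fz show ?thesis by simp
qed

lemma two_point:
  fixes a0 a1 b0 b1 :: real
  assumes "0 < a0" "0 < a1" "0 < b0" "0 < b1" "a0 + a1 = 1" "b0 + b1 = 1"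
  defines "p \<equiv> (\<lambda>n::nat. if n = 0 then a0 else a1)" and "q \<equiv> (\<lambda>n::nat. if n = 0 then b0 else b1)"
  shows "density_pair (count_space {0,1}) p q"
    and "\<And>f. fdiv f (count_space {0,1}) p q = ereal (b0 * f (a0 / b0) + b1 * f (a1 / b1))"
proof -
  show "density_pair (count_space {0,1}) p q"
    unfolding density_pair_def using assms
    by (auto simp: nn_integral_count_space_finite p_def q_def ennreal_plus[symmetric] simp del: ennreal_plus)
  fix f :: "real \<Rightarrow> real"
  show "fdiv f (count_space {0,1}) p q = ereal (b0 * f (a0 / b0) + b1 * f (a1 / b1))"
    by (subst fdiv_finite) (use assms in \<open>auto simp: p_def q_def\<close>)
qed

lemma bound:
  fixes f g :: "real \<Rightarrow> real"
  assumes "convex_on {0<..} f" "convex_on {0<..} g" "0 < a" "a \<le> b"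
  shows "\<exists>B. \<forall>x\<in>{a..b}. B \<le> \<beta> * f x - g x"
proof -
  have "continuous_on {0<..} f" "continuous_on {0<..} g"
    using convex_on_continuous[OF open_greaterThan assms(1)] convex_on_continuous[OF open_greaterThan assms(2)] by auto
  then have "continuous_on {a..b} (\<lambda>x. \<beta> * f x - g x)"
    using assms by (intro continuous_intros; auto elim!: continuous_on_subset)
  then obtain x where "\<forall>y\<in>{a..b}. \<beta> * f x - g x \<le> \<beta> * f y - g y"
    using continuous_attains_inf[of "{a..b}"] assms by force
  then show ?thesis by blast
qed

lemma liminf_freq:
  fixes X :: "real \<Rightarrow> real"
  assumes "Liminf F (\<lambda>t. ereal (X t)) < ereal \<beta>"
  shows "\<exists>\<beta>'<\<beta>. \<exists>\<^sub>F t in F. X t < \<beta>'"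
proof -
  from assms obtain y where y: "y < ereal \<beta>" "\<not> eventually (\<lambda>t. y < ereal (X t)) F"
    using le_Liminf_iff[of "ereal \<beta>" F "\<lambda>t. ereal (X t)"] by (auto simp: not_le)
  obtain b where b: "y < ereal b" "ereal b < ereal \<beta>" using ereal_dense2[OF y(1)] by blast
  have "\<exists>\<^sub>F t in F. X t < b"
  proof -
    have "\<exists>\<^sub>F t in F. \<not> y < ereal (X t)" using y(2) by (simp add: not_eventually)
    then show ?thesis
    proof (rule frequently_elim1)
      fix t assume "\<not> y < ereal (X t)"
      then have "ereal (X t) < ereal b" using b(1) by (meson not_le le_less_trans)
      then show "X t < b" by simp
    qed
  qed
  with b show ?thesis by auto
qed

lemma lin_aux:
  fixes ee xx yy ww zz mm cc MM :: real
  assumes "ee = xx + yy" "ww \<le> xx" "ww = zz / 2" "2 * (mm + cc + 1) < zz" "- cc \<le> yy" "MM \<le> mm" "0 \<le> cc"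
  shows "MM < ee"
  using assms by argo

theorem lemma2:
  fixes f g :: "real \<Rightarrow> real" and \<beta> :: real
  assumes "convex_on {0<..} f" and "convex_on {0<..} g"
    and "f 1 = 0" and "g 1 = 0"
  shows "(fzero f = \<infinity> \<and> Liminf (at_right 0) (\<lambda>t. ereal (g t / f t)) < ereal \<beta>
            \<longrightarrow> gap_unbounded \<beta> f g)
       \<and> (fstar0 f = \<infinity> \<and> Liminf at_top (\<lambda>t. ereal (g t / f t)) < ereal \<beta>
            \<longrightarrow> gap_unbounded \<beta> f g)"
proof (intro conjI impI; elim conjE)
  assume fz: "fzero f = \<infinity>" and li: "Liminf (at_right 0) (\<lambda>t. ereal (g t / f t)) < ereal \<beta>"
  have flim: "((\<lambda>t. ereal (f t)) \<longlongrightarrow> \<infinity>) (at_right 0)" using lim0 assms(1,3) fz by blast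
  obtain b where b: "b < \<beta>" "\<exists>\<^sub>F t in at_right 0. g t / f t < b"
    using liminf_freq[OF li] by blast
  obtain B where B: "\<forall>x\<in>{1..2}. B \<le> \<beta> * f x - g x"
    using bound[OF assms(1,2), of 1 2 \<beta>] by auto
  show "gap_unbounded \<beta> f g" unfolding gap_unbounded_def
  proof
    fix M :: real
    define K where "K = (2 * \<bar>M\<bar> + \<bar>B\<bar> + 1) / (\<beta> - b)"
    have K: "K > 0" using b(1) by (simp add: K_def)
    have ev1: "\<forall>\<^sub>F t in at_right 0. ereal K < ereal (f t)" using flim unfolding tendsto_PInfty by blast
    have ev2: "\<forall>\<^sub>F t in at_right (0::real). 0 < t \<and> t < 1"
      unfolding eventually_at_right_field by (intro exI[of _ 1]) auto
    have "\<exists>\<^sub>F t in at_right 0. (g t / f t < b \<and> ereal K < ereal (f t)) \<and> (0 < t \<and> t < 1)"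
      by (intro frequently_eventually_frequently[OF frequently_eventually_frequently[OF b(2) ev1] ev2])
    then obtain t where t: "g t / f t < b" "K < f t" "0 < t" "t < 1"
      using frequently_ex by fastforce
    have fpos: "f t > 0" using K t by linarith
    have gt: "g t < b * f t" using t(1) fpos by (simp add: divide_less_eq)
    have Bt: "B \<le> \<beta> * f (2 - t) - g (2 - t)" using B t by auto
    have "(\<beta> - b) * K < (\<beta> - b) * f t" using t(2) b(1) by simp
    then have "2 * \<bar>M\<bar> + \<bar>B\<bar> + 1 < (\<beta> - b) * f t" using b(1) by (simp add: K_def)
    then have ineq: "M < \<beta> * (1/2 * f t + 1/2 * f (2 - t)) - (1/2 * g t + 1/2 * g (2 - t))"
      using gt Bt by (simp add: algebra_simps)
    define p where "p = (\<lambda>n::nat. if n = 0 then t/2 else 1 - t/2)"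
    define q where "q = (\<lambda>n::nat. if n = 0 then 1/2 else (1/2::real))"
    define \<mu> where "\<mu> = count_space {0,1::nat}"
    have tp: "density_pair \<mu> p q"
      "\<And>h. fdiv h \<mu> p q = ereal (1/2 * h ((t/2) / (1/2)) + 1/2 * h ((1 - t/2) / (1/2)))"
      unfolding p_def q_def \<mu>_def using two_point[of "t/2" "1 - t/2" "1/2" "1/2"] t by auto
    have e1: "(t/2) / (1/2) = t" "(1 - t/2) / (1/2) = 2 - t" by (auto simp: field_simps)
    show "\<exists>(\<mu>::nat measure) p q. density_pair \<mu> p q \<and> fdiv g \<mu> p q < \<infinity> \<and>
        ereal M < ereal \<beta> * fdiv f \<mu> p q - fdiv g \<mu> p q"
      by (rule exI[of _ \<mu>], rule exI[of _ p], rule exI[of _ q])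
         (use ineq in \<open>simp_all add: tp e1\<close>)
  qed
next
  assume fz: "fstar0 f = \<infinity>" and li: "Liminf at_top (\<lambda>t. ereal (g t / f t)) < ereal \<beta>"
  have flim: "((\<lambda>t. ereal (f t / t)) \<longlongrightarrow> \<infinity>) at_top" using liminf_top assms(1,3) fz by blast
  obtain b where b: "b < \<beta>" "\<exists>\<^sub>F t in at_top. g t / f t < b"
    using liminf_freq[OF li] by blast
  obtain B where B: "\<forall>x\<in>{1/2..1}. B \<le> \<beta> * f x - g x"
    using bound[OF assms(1,2), of "1/2" 1 \<beta>] by auto
  show "gap_unbounded \<beta> f g" unfolding gap_unbounded_def
  proof
    fix M :: real
    define K where "K = 2 * (\<bar>M\<bar> + \<bar>B\<bar> + 1) / (\<beta> - b)"
    have K: "K > 0" using b(1) by (simp add: K_def)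
    have ev1: "\<forall>\<^sub>F t in at_top. ereal K < ereal (f t / t)" using flim unfolding tendsto_PInfty by blast
    have ev2: "\<forall>\<^sub>F t in at_top. (1::real) < t"
      unfolding eventually_at_top_linorder by (intro exI[of _ 2]) auto
    have "\<exists>\<^sub>F t in at_top. (g t / f t < b \<and> ereal K < ereal (f t / t)) \<and> 1 < t"
      by (intro frequently_eventually_frequently[OF frequently_eventually_frequently[OF b(2) ev1] ev2])
    then obtain t where t: "g t / f t < b" "K < f t / t" "1 < t"
      using frequently_ex by fastforce
    have fpos: "f t > 0" proof (rule ccontr)
      assume "\<not> f t > 0"
      then have "f t / t \<le> 0" using t(3) by (simp add: divide_nonpos_pos)
      then show False using K t(2) by linarith
    qed
    have gt: "g t < b * f t" using t(1) fpos by (simp add: divide_less_eq)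
    define r where "r = (1/2) / (1 - 1 / (2 * t))"
    have r: "1/2 \<le> r" "r \<le> 1" using t(3) by (auto simp: r_def field_simps)
    have Bt: "B \<le> \<beta> * f r - g r" using B r by auto
    have q1: "1/2 \<le> 1 - 1/(2*t)" "1 - 1/(2*t) \<le> 1" using t(3) by (auto simp: field_simps)
    have "(\<beta> - b) * K < (\<beta> - b) * (f t / t)" using t(2) b(1) by (intro mult_strict_left_mono) auto
    then have A1: "2 * (\<bar>M\<bar> + \<bar>B\<bar> + 1) < (\<beta> - b) * (f t / t)" using b(1) by (simp add: K_def)
    have A2: "(\<beta> - b) * f t < \<beta> * f t - g t" using gt by (simp add: algebra_simps)
    have A3: "1/(2*t) * (\<beta> * f t - g t) \<ge> 1/(2*t) * ((\<beta> - b) * f t)"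
      using A2 t(3) by (intro mult_left_mono) auto
    have A4: "1/(2*t) * ((\<beta> - b) * f t) = (\<beta> - b) * (f t / t) / 2" by (simp add: field_simps)
    have A5: "(1 - 1/(2*t)) * (\<beta> * f r - g r) \<ge> - \<bar>B\<bar>"
    proof -
      have "(1 - 1/(2*t)) * (\<beta> * f r - g r) \<ge> (1 - 1/(2*t)) * B"
        using Bt q1 by (intro mult_left_mono) auto
      moreover have "(1 - 1/(2*t)) * B \<ge> - \<bar>B\<bar>"
      proof -
        have "\<bar>(1 - 1/(2*t)) * B\<bar> \<le> \<bar>B\<bar>"
          using q1 unfolding abs_mult by (intro mult_left_le_one_le) auto
        then show ?thesis by linarith
      qed
      ultimately show ?thesis by linarith
    qed
    have ineq: "M < \<beta> * (1/(2*t) * f t + (1 - 1/(2*t)) * f r) - (1/(2*t) * g t + (1 - 1/(2*t)) * g r)"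
    proof -
      have "\<beta> * (1/(2*t) * f t + (1 - 1/(2*t)) * f r) - (1/(2*t) * g t + (1 - 1/(2*t)) * g r)
        = 1/(2*t) * (\<beta> * f t - g t) + (1 - 1/(2*t)) * (\<beta> * f r - g r)" by (simp add: algebra_simps add_divide_distrib diff_divide_distrib)
      then show ?thesis using lin_aux[OF _ A3 A4 A1 A5 abs_ge_self[of M] abs_ge_zero[of B]] by blast
    qed
    define p where "p = (\<lambda>n::nat. if n = 0 then 1/2 else (1/2::real))"
    define q where "q = (\<lambda>n::nat. if n = 0 then 1/(2*t) else 1 - 1/(2*t))"
    define \<mu> where "\<mu> = count_space {0,1::nat}"
    have e1: "(1/2) / (1/(2*t)) = t" "(1/2) / (1 - 1/(2*t)) = r" by (auto simp: field_simps r_def)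
    have tp0: "density_pair \<mu> p q"
      "\<And>h. fdiv h \<mu> p q = ereal (1/(2*t) * h ((1/2) / (1/(2*t))) + (1 - 1/(2*t)) * h ((1/2) / (1 - 1/(2*t))))"
      unfolding p_def q_def \<mu>_def using two_point[of "1/2" "1/2" "1/(2*t)" "1 - 1/(2*t)"] t(3) by (auto simp: field_simps)
    have tp: "density_pair \<mu> p q"
      "\<And>h. fdiv h \<mu> p q = ereal (1/(2*t) * h t + (1 - 1/(2*t)) * h r)"
      using tp0 unfolding e1 by auto
    show "\<exists>(\<mu>::nat measure) p q. density_pair \<mu> p q \<and> fdiv g \<mu> p q < \<infinity> \<and>
        ereal M < ereal \<beta> * fdiv f \<mu> p q - fdiv g \<mu> p q"
      by (rule exI[of _ \<mu>], rule exI[of _ p], rule exI[of _ q])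
         (use ineq in \<open>simp_all only: tp\<close>; simp)
  qed
qed

end
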